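(* Let $X=\Gamma\backslash G$ be the compact solvmanifold described in the context and let $J$ be the almost-complex structure on $X$ whose $(1,0)$-forms are spanned by $\Phi^1=e^1+ie^2$, $\Phi^2=e^3+ie^4$, $\Phi^3=e^5+ie^6$. Then there is no symplectic form on $X$ compatible with $J$ (i.e. no closed non-degenerate real $2$-form $\omega$ with $\omega(J\cdot,J\cdot)=\omega$ and $\omega(\cdot,J\cdot)$ positive definite).
   Context: Let $G$ be the Lie group $\mathbb{R}^2\ltimes_\Phi\mathbb{R}^4$ with coordinates $(t,x,y_1,y_2,z_1,z_2)$ and product $(t,x,y_1,y_2,z_1,z_2)*(t',x',y_1',y_2',z_1',z_2')=(t+t',x+x',y_1'e^t+xz_1'e^t+y_1,\,y_2'e^{-t}+xz_2'e^{-t}+y_2,\,z_1'e^t+z_1,\,z_2'e^{-t}+z_2)$. Let $B\in SL(2,\mathbb{Z})$ have distinct eigenvalues $e^{a_0},e^{-a_0}$ ($a_0>0$) and $P$ real invertible with $PBP^{-1}=\mathrm{diag}(e^{a_0},e^{-a_0})$. Let $\Gamma$ be the lattice of elements with $t\in a_0\mathbb{Z}$, $x\in\mathbb{Z}$, $(y_1,y_2)=(m_1,m_2)P^t$, $(z_1,z_2)=(n_1,n_2)P^t$, $m_i,n_i\in\mathbb{Z}$, and $X=\Gamma\backslash G$. Left-invariant $1$-forms: $e^1=dt$, $e^2=dx$, $e^3=e^{-t}dy_1-xe^{-t}dz_1$, $e^4=e^{t}dy_2-xe^{t}dz_2$, $e^5=e^{-t}dz_1$, $e^6=e^tdz_2$,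 with $de^1=de^2=0$, $de^3=-e^{13}-e^{25}$, $de^4=e^{14}-e^{26}$, $de^5=-e^{15}$, $de^6=e^{16}$ ($e^{ij}=e^i\wedge e^j$). *)

theory Defs
  imports "HOL-Analysis.Analysis"
begin

text \<open>Points of G = R^2 \<ltimes> R^4 are vectors p :: real^6 with coordinates
  (t,x,y1,y2,z1,z2) = (p$0, p$1, p$2, p$3, p$4, p$5).  Tangent vectors are also real^6
  (coordinate components). Index convention for 2x2 matrices: first index 0, second 1.\<close>

definition gmul :: "real^6 \<Rightarrow> real^6 \<Rightarrow> real^6" where
  "gmul g h = (\<chi> i.
     if i = 0 then g$0 + h$0
     else if i = 1 then g$1 + h$1
     else if i = 2 then h$2 * exp (g$0) + g$1 * h$4 * exp (g$0) + g$2
     else if i = 3 then h$3 * exp (- g$0) + g$1 * h$5 * exp (- g$0) + g$3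
     else if i = 4 then h$4 * exp (g$0) + g$4
     else h$5 * exp (- g$0) + g$5)"

definition Gamma :: "real \<Rightarrow> real^2^2 \<Rightarrow> (real^6) set" where
  "Gamma a0 P = {g. (\<exists>k::int. g$0 = a0 * of_int k) \<and> (\<exists>n::int. g$1 = of_int n) \<and>
      (\<exists>m1 m2::int. g$2 = of_int m1 * P$0$0 + of_int m2 * P$0$1 \<and>
                    g$3 = of_int m1 * P$1$0 + of_int m2 * P$1$1) \<and>
      (\<exists>n1 n2::int. g$4 = of_int n1 * P$0$0 + of_int n2 * P$0$1 \<and>
                    g$5 = of_int n1 * P$1$0 + of_int n2 * P$1$1)}"

text \<open>Left-invariant coframe e^1..e^6 (here indexed e 1 .. e 6), evaluated at p on v.\<close>
definition coframe :: "nat \<Rightarrow> real^6 \<Rightarrow> real^6 \<Rightarrow> real" where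
  "coframe k p v =
     (if k = 1 then v$0
      else if k = 2 then v$1
      else if k = 3 then exp (- p$0) * v$2 - p$1 * exp (- p$0) * v$4
      else if k = 4 then exp (p$0) * v$3 - p$1 * exp (p$0) * v$5
      else if k = 5 then exp (- p$0) * v$4
      else if k = 6 then exp (p$0) * v$5
      else 0)"

definition Phi :: "nat \<Rightarrow> real^6 \<Rightarrow> real^6 \<Rightarrow> complex" where
  "Phi k p v = Complex (coframe (2*k - 1) p v) (coframe (2*k) p v)"

coinductive smooth_fun :: "(real^6 \<Rightarrow> real) \<Rightarrow> bool" where
  "(\<forall>p. f differentiable (at p)) \<Longrightarrow>
   (\<forall>u. smooth_fun (\<lambda>p. frechet_derivative f (at p) u)) \<Longrightarrow> smooth_fun f"

definition two_form :: "(real^6 \<Rightarrow> real^6 \<Rightarrow> real^6 \<Rightarrow> real) \<Rightarrow> bool" where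
  "two_form \<omega> \<longleftrightarrow> (\<forall>p. bilinear (\<omega> p) \<and> (\<forall>v. \<omega> p v v = 0)) \<and>
     (\<forall>v w. smooth_fun (\<lambda>p. \<omega> p v w))"

text \<open>Exterior derivative of a 2-form in the global coordinates of R^6 (evaluated on
  constant vector fields u v w, whose brackets vanish).\<close>
definition ext_d2 :: "(real^6 \<Rightarrow> real^6 \<Rightarrow> real^6 \<Rightarrow> real) \<Rightarrow> real^6 \<Rightarrow> real^6 \<Rightarrow> real^6 \<Rightarrow> real^6 \<Rightarrow> real" where
  "ext_d2 \<omega> p u v w =
      frechet_derivative (\<lambda>q. \<omega> q v w) (at p) u
    - frechet_derivative (\<lambda>q. \<omega> q u w) (at p) v
    + frechet_derivative (\<lambda>q. \<omega> q u v) (at p) w"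

definition closed_form :: "(real^6 \<Rightarrow> real^6 \<Rightarrow> real^6 \<Rightarrow> real) \<Rightarrow> bool" where
  "closed_form \<omega> \<longleftrightarrow> (\<forall>p u v w. ext_d2 \<omega> p u v w = 0)"

text \<open>Invariance under the left action of \<Gamma> (i.e. the form descends to X = \<Gamma>\G):
  L_\<gamma>^* \<omega> = \<omega> for all \<gamma> \<in> \<Gamma>.\<close>
definition left_invariant_under :: "(real^6) set \<Rightarrow> (real^6 \<Rightarrow> real^6 \<Rightarrow> real^6 \<Rightarrow> real) \<Rightarrow> bool" where
  "left_invariant_under S \<omega> \<longleftrightarrow> (\<forall>\<gamma>\<in>S. \<forall>p v w.
      \<omega> (gmul \<gamma> p) (frechet_derivative (gmul \<gamma>) (at p) v)
                     (frechet_derivative (gmul \<gamma>) (at p) w) = \<omega> p v w)"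

definition compatible_symplectic ::
  "(real^6) set \<Rightarrow> (real^6 \<Rightarrow> real^6 \<Rightarrow> real^6) \<Rightarrow> (real^6 \<Rightarrow> real^6 \<Rightarrow> real^6 \<Rightarrow> real) \<Rightarrow> bool" where
  "compatible_symplectic S J \<omega> \<longleftrightarrow>
     two_form \<omega> \<and> closed_form \<omega> \<and> left_invariant_under S \<omega> \<and>
     (\<forall>p v. (\<forall>w. \<omega> p v w = 0) \<longrightarrow> v = 0) \<and>
     (\<forall>p v w. \<omega> p (J p v) (J p w) = \<omega> p v w) \<and>
     (\<forall>p v. v \<noteq> 0 \<longrightarrow> \<omega> p v (J p v) > 0)"

end

theory Submission
  imports Defs
begin
definition av :: "real^6 \<Rightarrow> (real^6 \<Rightarrow> real) \<Rightarrow> real^6 \<Rightarrow> real" where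
  "av a h p = integral {0..1} (\<lambda>s. h (p + s *\<^sub>R a))"

definition DD :: "(real^6 \<Rightarrow> real) \<Rightarrow> real^6 \<Rightarrow> (real^6 \<Rightarrow> real) \<Rightarrow> bool" where
  "DD h v h' \<longleftrightarrow> continuous_on UNIV h \<and> continuous_on UNIV h' \<and>
     (\<forall>p t. ((\<lambda>s. h (p + s *\<^sub>R v)) has_real_derivative h' (p + t *\<^sub>R v)) (at t))"

lemma cont_comp: "continuous_on UNIV h \<Longrightarrow> continuous_on S g \<Longrightarrow> continuous_on S (\<lambda>x. h (g x))"
  by (rule continuous_on_compose2) auto

lemma cont_line:
  fixes h :: "real^6 \<Rightarrow> real"
  assumes "continuous_on UNIV h"
  shows "continuous_on A (\<lambda>s::real. h (p + s *\<^sub>R a))"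
proof -
  have "continuous_on A (\<lambda>s::real. p + s *\<^sub>R a)" by (intro continuous_intros)
  then show ?thesis by (rule continuous_on_compose2[OF assms]) auto
qed

lemma av_cont:
  assumes "continuous_on UNIV h"
  shows "continuous_on UNIV (av a h)"
proof -
  have "continuous_on (UNIV \<times> cbox 0 1) (\<lambda>(p, s::real). h (p + s *\<^sub>R a))"
  proof -
    have "continuous_on (UNIV \<times> cbox 0 1) (\<lambda>x. h (fst x + snd x *\<^sub>R a))"
      by (rule cont_comp[OF assms]) (intro continuous_intros)
    then show ?thesis by (simp add: split_beta)
  qed
  from integral_continuous_on_param[OF this] show ?thesis
    unfolding av_def cbox_interval by simp
qed

lemma av_DD:
  assumes "DD h v h'"
  shows "DD (av a h) v (av a h')"
proof -
  have hc: "continuous_on UNIV h" and hc': "continuous_on UNIV h'"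
    and d: "\<And>p t. ((\<lambda>s. h (p + s *\<^sub>R v)) has_real_derivative h' (p + t *\<^sub>R v)) (at t)"
    using assms unfolding DD_def by auto
  have "((\<lambda>x. av a h (p + x *\<^sub>R v)) has_real_derivative av a h' (p + t *\<^sub>R v)) (at t)" for p t
  proof -
    have "((\<lambda>x. integral (cbox 0 1) (\<lambda>s. h (p + x *\<^sub>R v + s *\<^sub>R a))) has_field_derivative
           integral (cbox 0 1) (\<lambda>s. h' (p + t *\<^sub>R v + s *\<^sub>R a))) (at t within UNIV)"
    proof (rule leibniz_rule_field_derivative[where fx="\<lambda>x s. h' (p + x *\<^sub>R v + s *\<^sub>R a)"])
      fix x s :: real
      have "((\<lambda>x. h ((p + s *\<^sub>R a) + x *\<^sub>R v)) has_real_derivative h' ((p + s *\<^sub>R a) + x *\<^sub>R v)) (at x)"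
        by (rule d)
      then show "((\<lambda>x. h (p + x *\<^sub>R v + s *\<^sub>R a)) has_field_derivative h' (p + x *\<^sub>R v + s *\<^sub>R a)) (at x within UNIV)"
        by (simp add: add_ac)
    next
      fix x :: real
      show "(\<lambda>s. h (p + x *\<^sub>R v + s *\<^sub>R a)) integrable_on cbox 0 1"
        unfolding cbox_interval
        by (rule integrable_continuous_interval) (rule cont_line[OF hc])
    next
      show "continuous_on (UNIV \<times> cbox 0 1) (\<lambda>(x, s). h' (p + x *\<^sub>R v + s *\<^sub>R a))"
      proof -
        have "continuous_on (UNIV \<times> cbox 0 1) (\<lambda>x. h' (p + fst x *\<^sub>R v + snd x *\<^sub>R a))"
          by (rule cont_comp[OF hc']) (intro continuous_intros)
        then show ?thesis by (simp add: split_beta)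
      qed
    qed auto
    then show ?thesis unfolding av_def cbox_interval by (simp add: add_ac)
  qed
  then show ?thesis unfolding DD_def using av_cont[OF hc] av_cont[OF hc'] by auto
qed

lemma av_zero:
  assumes "DD h a h'" and per: "\<And>q. h (q + a) = h q"
  shows "av a h' p = 0"
proof -
  have d: "\<And>t. ((\<lambda>s. h (p + s *\<^sub>R a)) has_real_derivative h' (p + t *\<^sub>R a)) (at t)"
    using assms unfolding DD_def by auto
  have "((\<lambda>s. h' (p + s *\<^sub>R a)) has_integral (h (p + 1 *\<^sub>R a) - h (p + 0 *\<^sub>R a))) {0..1}"
    by (rule fundamental_theorem_of_calculus)
      (auto simp: has_real_derivative_iff_has_vector_derivative[symmetric] intro!: has_field_derivative_at_within d)
  then show ?thesis unfolding av_def using per[of p] by (simp add: integral_unique)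
qed

lemma DD_const_line:
  assumes "DD h v h'" "\<And>q. h' q = 0"
  shows "h (p + c *\<^sub>R v) = h p"
proof -
  have "\<forall>t. ((\<lambda>s. h (p + s *\<^sub>R v)) has_real_derivative 0) (at t)"
    using assms unfolding DD_def by (metis)
  from DERIV_isconst_all[OF this, of c 0] show ?thesis by simp
qed

lemma av_pos:
  assumes "continuous_on UNIV h" "\<And>q. h q > 0"
  shows "av a h p > 0"
proof -
  have c: "continuous_on {0..1} (\<lambda>s::real. h (p + s *\<^sub>R a))" by (rule cont_line[OF assms(1)])
  obtain s0 where s0: "s0 \<in> {0..1}" "\<And>s. s \<in> {0..1} \<Longrightarrow> h (p + s0 *\<^sub>R a) \<le> h (p + s *\<^sub>R a)"
    using continuous_attains_inf[OF compact_Icc _ c] by auto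
  have "integral {0..1} (\<lambda>s::real. h (p + s0 *\<^sub>R a)) \<le> integral {0..1} (\<lambda>s. h (p + s *\<^sub>R a))"
    by (rule integral_le) (auto intro: integrable_continuous_interval c s0)
  moreover have "integral {0..1} (\<lambda>s::real. h (p + s0 *\<^sub>R a)) = h (p + s0 *\<^sub>R a)" by simp
  ultimately show ?thesis unfolding av_def using assms(2)[of "p + s0 *\<^sub>R a"] by linarith
qed

lemma av_add:
  assumes "continuous_on UNIV f" "continuous_on UNIV g"
  shows "av a (\<lambda>q. f q + g q) p = av a f p + av a g p"
  unfolding av_def
  by (rule integral_add; rule integrable_continuous_interval; rule cont_line; fact)

lemma av_cmult: "av a (\<lambda>q. c * f q) p = c * av a f p"
  unfolding av_def by simp

lemma av_neg: "av a (\<lambda>q. - f q) p = - av a f p"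
  unfolding av_def by simp

lemma av_coord:
  assumes "a $ 1 = 0"
  shows "av a (\<lambda>q. q $ 1 * f q) p = p $ 1 * av a f p"
proof -
  have "(\<lambda>s. (p + s *\<^sub>R a) $ 1 * f (p + s *\<^sub>R a)) = (\<lambda>s. p $ 1 * f (p + s *\<^sub>R a))"
    using assms by auto
  then show ?thesis unfolding av_def by simp
qed

lemma av_transl:
  assumes "\<And>q. h (q + b) = h q"
  shows "av a h (p + b) = av a h p"
proof -
  have "(\<lambda>s. h (p + b + s *\<^sub>R a)) = (\<lambda>s. h (p + s *\<^sub>R a))"
    using assms by (metis add.commute add.left_commute)
  then show ?thesis unfolding av_def by simp
qed

lemma six_cases: fixes x :: 6 shows "x = 0 \<or> x = 1 \<or> x = 2 \<or> x = 3 \<or> x = 4 \<or> x = 5"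
proof (induct x)
  case (of_int z)
  then have "z = 0 \<or> z = 1 \<or> z = 2 \<or> z = 3 \<or> z = 4 \<or> z = 5" by auto
  then show ?case by auto
qed
lemma vec6_eq: fixes x y :: "real^6"
  assumes "x$0 = y$0" "x$1 = y$1" "x$2 = y$2" "x$3 = y$3" "x$4 = y$4" "x$5 = y$5"
  shows "x = y"
  unfolding vec_eq_iff proof
  fix i :: 6 show "x$i = y$i" using six_cases[of i] assms by auto
qed
definition mk :: "real \<Rightarrow> real \<Rightarrow> real \<Rightarrow> real \<Rightarrow> real \<Rightarrow> real \<Rightarrow> real^6" where
  "mk a b c d e f = (\<chi> i. if i = 0 then a else if i = 1 then b else if i = 2 then c
      else if i = 3 then d else if i = 4 then e else f)"
lemma mk_nth[simp]: "mk a b c d e f $ 0 = a" "mk a b c d e f $ 1 = b" "mk a b c d e f $ 2 = c"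
  "mk a b c d e f $ 3 = d" "mk a b c d e f $ 4 = e" "mk a b c d e f $ 5 = f"
  by (simp_all add: mk_def)
lemma mk_eta: "x = mk (x$0) (x$1) (x$2) (x$3) (x$4) (x$5)"
  by (rule vec6_eq) simp_all
lemma mk_add[simp]: "mk a b c d e f + mk a' b' c' d' e' f' = mk (a+a') (b+b') (c+c') (d+d') (e+e') (f+f')"
  by (rule vec6_eq) simp_all
lemma mk_scale[simp]: "r *\<^sub>R mk a b c d e f = mk (r*a) (r*b) (r*c) (r*d) (r*e) (r*f)"
  by (rule vec6_eq) simp_all
lemma mk_minus[simp]: "- mk a b c d e f = mk (-a) (-b) (-c) (-d) (-e) (-f)"
  by (rule vec6_eq) simp_all

lemma mk_zero_iff: "mk a b c d e f = 0 \<longleftrightarrow> a = 0 \<and> b = 0 \<and> c = 0 \<and> d = 0 \<and> e = 0 \<and> f = 0"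
proof
  assume "mk a b c d e f = 0"
  then have "\<forall>i. mk a b c d e f $ i = 0" by simp
  then show "a = 0 \<and> b = 0 \<and> c = 0 \<and> d = 0 \<and> e = 0 \<and> f = 0" using mk_nth by metis
next
  assume "a = 0 \<and> b = 0 \<and> c = 0 \<and> d = 0 \<and> e = 0 \<and> f = 0"
  then show "mk a b c d e f = 0" by (intro vec6_eq) simp_all
qed

lemma gmul_t0:
  assumes "g$0 = 0"
  shows "gmul g h = g + (h + mk 0 0 (g$1 * h$4) (g$1 * h$5) 0 0)"
  by (rule vec6_eq) (simp_all add: gmul_def assms)

lemma gmul_deriv:
  assumes "g$0 = 0"
  shows "frechet_derivative (gmul g) (at p) v = v + mk 0 0 (g$1 * v$4) (g$1 * v$5) 0 0"
proof -
  let ?L = "\<lambda>h::real^6. h + mk 0 0 (g$1 * h$4) (g$1 * h$5) 0 0"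
  have lin: "linear ?L"
  proof (rule linearI)
    fix b1 b2 :: "real^6" show "?L (b1 + b2) = ?L b1 + ?L b2" by (simp add: algebra_simps)
  next
    fix r and b :: "real^6" show "?L (r *\<^sub>R b) = r *\<^sub>R ?L b" by (simp add: scaleR_right_distrib mult.left_commute)
  qed
  then have bl: "bounded_linear ?L" by (rule linear_conv_bounded_linear[THEN iffD1])
  have "((\<lambda>h. g + ?L h) has_derivative (\<lambda>h. 0 + ?L h)) (at p)"
    by (rule has_derivative_add[OF has_derivative_const bounded_linear_imp_has_derivative[OF bl]])
  moreover have "(\<lambda>h. g + ?L h) = gmul g" using gmul_t0[OF assms] by auto
  ultimately have D: "(gmul g has_derivative ?L) (at p)" by simp
  show ?thesis using fun_cong[OF frechet_derivative_at[OF D], of v] by simp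
qed

lemma C1_DD:
  fixes f :: "real^6 \<Rightarrow> real"
  assumes d: "\<forall>p. f differentiable (at p)" and c: "continuous_on UNIV (\<lambda>p. frechet_derivative f (at p) v)"
  shows "DD f v (\<lambda>p. frechet_derivative f (at p) v)"
proof -
  have fc: "continuous_on UNIV f"
    by (rule differentiable_imp_continuous_on) (simp add: differentiable_on_def d differentiable_at_withinI)
  have "((\<lambda>s. f (p + s *\<^sub>R v)) has_real_derivative frechet_derivative f (at (p + t *\<^sub>R v)) v) (at t)" for p t
  proof -
    let ?q = "p + t *\<^sub>R v"
    have F: "(f has_derivative frechet_derivative f (at ?q)) (at ?q)"
      using d frechet_derivative_works by blast
    have bl: "bounded_linear (frechet_derivative f (at ?q))" using has_derivative_bounded_linear[OF F] .
    have lin: "((\<lambda>s. p + s *\<^sub>R v) has_derivative (\<lambda>s. s *\<^sub>R v)) (at t)"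
      by (auto intro!: derivative_eq_intros)
    have H: "((\<lambda>s. f (p + s *\<^sub>R v)) has_derivative (\<lambda>s. frechet_derivative f (at ?q) (s *\<^sub>R v))) (at t)"
      by (rule has_derivative_compose[OF lin F])
    have eq: "(\<lambda>s. frechet_derivative f (at ?q) (s *\<^sub>R v)) = (*) (frechet_derivative f (at ?q) v)"
      by (rule ext) (use bl in \<open>simp add: linear_simps\<close>)
    show ?thesis unfolding has_field_derivative_def using H unfolding eq .
  qed
  then show ?thesis unfolding DD_def using fc c by auto
qed

lemma smooth_diff: "smooth_fun f \<Longrightarrow> f differentiable (at p)"
  by (erule smooth_fun.cases) auto

lemma smooth_dcont: "smooth_fun f \<Longrightarrow> continuous_on UNIV (\<lambda>p. frechet_derivative f (at p) v)"
proof (erule smooth_fun.cases)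
  fix g assume "f = g" "\<forall>u. smooth_fun (\<lambda>p. frechet_derivative g (at p) u)"
  then have "\<forall>p. (\<lambda>p. frechet_derivative f (at p) v) differentiable (at p)" using smooth_diff by blast
  then show ?thesis
    by (intro differentiable_imp_continuous_on) (simp add: differentiable_on_def differentiable_at_withinI)
qed

lemma comb_deriv:
  fixes f g :: "real^6 \<Rightarrow> real"
  assumes "f differentiable (at p)" "g differentiable (at p)"
  shows "((\<lambda>q. f q + q$1 * g q) has_derivative
     (\<lambda>v. frechet_derivative f (at p) v + (p$1 * frechet_derivative g (at p) v + v$1 * g p))) (at p)"
proof -
  have F: "(f has_derivative frechet_derivative f (at p)) (at p)"
    using assms frechet_derivative_works by blast
  have G: "(g has_derivative frechet_derivative g (at p)) (at p)"
    using assms frechet_derivative_works by blast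
  have X: "((\<lambda>q::real^6. q$1) has_derivative (\<lambda>v. v$1)) (at p)"
    by (rule bounded_linear_imp_has_derivative[OF bounded_linear_vec_nth])
  show ?thesis by (rule has_derivative_add[OF F has_derivative_mult[OF X G]])
qed

lemma comb_C1:
  fixes f g :: "real^6 \<Rightarrow> real"
  assumes "smooth_fun f" "smooth_fun g"
  shows "\<forall>p. (\<lambda>q. f q + q$1 * g q) differentiable (at p)"
    and "frechet_derivative (\<lambda>q. f q + q$1 * g q) (at p) v =
        frechet_derivative f (at p) v + (p$1 * frechet_derivative g (at p) v + v$1 * g p)"
    and "continuous_on UNIV (\<lambda>p. frechet_derivative (\<lambda>q. f q + q$1 * g q) (at p) v)"
proof -
  have D: "\<And>p. ((\<lambda>q. f q + q$1 * g q) has_derivative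
     (\<lambda>v. frechet_derivative f (at p) v + (p$1 * frechet_derivative g (at p) v + v$1 * g p))) (at p)"
    by (rule comb_deriv) (use assms smooth_diff in auto)
  then show "\<forall>p. (\<lambda>q. f q + q$1 * g q) differentiable (at p)" unfolding differentiable_def by blast
  have E: "\<And>p. frechet_derivative (\<lambda>q. f q + q$1 * g q) (at p) v =
        frechet_derivative f (at p) v + (p$1 * frechet_derivative g (at p) v + v$1 * g p)"
    using fun_cong[OF frechet_derivative_at[OF D]] by metis
  then show "frechet_derivative (\<lambda>q. f q + q$1 * g q) (at p) v =
        frechet_derivative f (at p) v + (p$1 * frechet_derivative g (at p) v + v$1 * g p)" .
  have gc: "continuous_on UNIV g"
    by (rule differentiable_imp_continuous_on) (simp add: differentiable_on_def assms smooth_diff differentiable_at_withinI)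
  show "continuous_on UNIV (\<lambda>p. frechet_derivative (\<lambda>q. f q + q$1 * g q) (at p) v)"
    unfolding E
    by (intro continuous_intros smooth_dcont assms gc)
qed

definition "e1 = mk 0 1 0 0 0 0"
definition "e2 = mk 0 0 1 0 0 0"
definition "e3 = mk 0 0 0 1 0 0"
definition "e4 = mk 0 0 0 0 1 0"

lemma e_nth[simp]:
  "e1$0 = 0" "e1$1 = 1" "e1$2 = 0" "e1$3 = 0" "e1$4 = 0" "e1$5 = 0"
  "e2$0 = 0" "e2$1 = 0" "e2$2 = 1" "e2$3 = 0" "e2$4 = 0" "e2$5 = 0"
  "e3$0 = 0" "e3$1 = 0" "e3$2 = 0" "e3$3 = 1" "e3$4 = 0" "e3$5 = 0"
  "e4$0 = 0" "e4$1 = 0" "e4$2 = 0" "e4$3 = 0" "e4$4 = 1" "e4$5 = 0"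
  by (simp_all add: e1_def e2_def e3_def e4_def)

lemma bil_antisym:
  assumes "bilinear B" "\<forall>v. B v v = 0"
  shows "B u w = - B w u"
proof -
  have "B (u + w) (u + w) = B u u + B u w + B w u + B w w"
    using assms(1) by (simp add: bilinear_ladd bilinear_radd)
  then show ?thesis using assms(2) by (metis add.commute add.right_neutral add_eq_0_iff)
qed

lemma fd_neg:
  fixes f :: "real^6 \<Rightarrow> real"
  assumes "f differentiable (at p)"
  shows "frechet_derivative (\<lambda>q. - f q) (at p) v = - frechet_derivative f (at p) v"
proof -
  have F: "(f has_derivative frechet_derivative f (at p)) (at p)"
    using assms frechet_derivative_works by blast
  have "((\<lambda>q. - f q) has_derivative (\<lambda>v. - frechet_derivative f (at p) v)) (at p)"
    by (rule has_derivative_minus[OF F])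
  from fun_cong[OF frechet_derivative_at[OF this], of v] show ?thesis by simp
qed

lemma fd_lin2:
  fixes f :: "real^6 \<Rightarrow> real"
  assumes "f differentiable (at p)"
  shows "frechet_derivative f (at p) (a *\<^sub>R x + b *\<^sub>R y) = a * frechet_derivative f (at p) x + b * frechet_derivative f (at p) y"
proof -
  have F: "(f has_derivative frechet_derivative f (at p)) (at p)"
    using assms frechet_derivative_works by blast
  have bl: "bounded_linear (frechet_derivative f (at p))" using has_derivative_bounded_linear[OF F] .
  then show ?thesis by (simp add: linear_simps)
qed

context
  fixes \<omega> :: "real^6 \<Rightarrow> real^6 \<Rightarrow> real^6 \<Rightarrow> real" and a0 :: real and P :: "real^2^2"
    and J :: "real^6 \<Rightarrow> real^6 \<Rightarrow> real^6"
  assumes TF: "two_form \<omega>" and CL: "closed_form \<omega>" and LI: "left_invariant_under (Gamma a0 P) \<omega>"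
    and POS: "\<forall>p v. v \<noteq> 0 \<longrightarrow> \<omega> p v (J p v) > 0"
    and JJ: "\<forall>p v k. k \<in> {1,2,3} \<longrightarrow> Phi k p (J p v) = \<i> * Phi k p v"
    and DP: "P$0$0 * P$1$1 - P$0$1 * P$1$0 \<noteq> 0"
begin

lemma bil: "bilinear (\<omega> p)" and alt: "\<omega> p v v = 0" and smooth: "smooth_fun (\<lambda>p. \<omega> p v w)"
  using TF unfolding two_form_def by auto

lemma antisym: "\<omega> p u w = - \<omega> p w u"
  using bil_antisym[OF bil] alt by blast

end

definition "A1 (P::real^2^2) = mk 0 0 (P$0$0) (P$1$0) 0 0"
definition "A2 (P::real^2^2) = mk 0 0 (P$0$1) (P$1$1) 0 0"
definition "B1 (P::real^2^2) = mk 0 0 0 0 (P$0$0) (P$1$0)"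
definition "B2 (P::real^2^2) = mk 0 0 0 0 (P$0$1) (P$1$1)"

lemma AB_nth[simp]:
  "A1 P $ 0 = 0" "A1 P $ 1 = 0" "A1 P $ 4 = 0" "A1 P $ 5 = 0"
  "A2 P $ 0 = 0" "A2 P $ 1 = 0" "A2 P $ 4 = 0" "A2 P $ 5 = 0"
  "B1 P $ 0 = 0" "B1 P $ 1 = 0" "B2 P $ 0 = 0" "B2 P $ 1 = 0"
  by (simp_all add: A1_def A2_def B1_def B2_def)

lemma lin2:
  fixes a b c d y1 y2 :: real
  assumes "a * d - b * c \<noteq> 0"
  shows "((d * y1 - b * y2) / (a * d - b * c)) * a + ((a * y2 - c * y1) / (a * d - b * c)) * b = y1"
    and "((d * y1 - b * y2) / (a * d - b * c)) * c + ((a * y2 - c * y1) / (a * d - b * c)) * d = y2"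
proof -
  have e: "(d * y1 - b * y2) * a + (a * y2 - c * y1) * b = (a * d - b * c) * y1" by (simp add: algebra_simps)
  have "((d * y1 - b * y2) / (a * d - b * c)) * a + ((a * y2 - c * y1) / (a * d - b * c)) * b
     = ((d * y1 - b * y2) * a + (a * y2 - c * y1) * b) / (a * d - b * c)" by (simp add: add_divide_distrib)
  also have "\<dots> = y1" unfolding e using assms by simp
  finally show "((d * y1 - b * y2) / (a * d - b * c)) * a + ((a * y2 - c * y1) / (a * d - b * c)) * b = y1" .
  have e: "(d * y1 - b * y2) * c + (a * y2 - c * y1) * d = (a * d - b * c) * y2" by (simp add: algebra_simps)
  have "((d * y1 - b * y2) / (a * d - b * c)) * c + ((a * y2 - c * y1) / (a * d - b * c)) * d
     = ((d * y1 - b * y2) * c + (a * y2 - c * y1) * d) / (a * d - b * c)" by (simp add: add_divide_distrib)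
  also have "\<dots> = y2" unfolding e using assms by simp
  finally show "((d * y1 - b * y2) / (a * d - b * c)) * c + ((a * y2 - c * y1) / (a * d - b * c)) * d = y2" .
qed

lemma ycomb:
  assumes "P$0$0 * P$1$1 - P$0$1 * P$1$0 \<noteq> 0"
  shows "mk 0 0 y1 y2 0 0 = ((P$1$1 * y1 - P$0$1 * y2) / (P$0$0 * P$1$1 - P$0$1 * P$1$0)) *\<^sub>R A1 P
     + ((P$0$0 * y2 - P$1$0 * y1) / (P$0$0 * P$1$1 - P$0$1 * P$1$0)) *\<^sub>R A2 P"
  unfolding A1_def A2_def using lin2[OF assms, of y1 y2] by simp

lemma zcomb:
  assumes "P$0$0 * P$1$1 - P$0$1 * P$1$0 \<noteq> 0"
  shows "mk 0 0 0 0 y1 y2 = ((P$1$1 * y1 - P$0$1 * y2) / (P$0$0 * P$1$1 - P$0$1 * P$1$0)) *\<^sub>R B1 P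
     + ((P$0$0 * y2 - P$1$0 * y1) / (P$0$0 * P$1$1 - P$0$1 * P$1$0)) *\<^sub>R B2 P"
  unfolding B1_def B2_def using lin2[OF assms, of y1 y2] by simp

lemma mem_lat: "mk 0 0 (of_int m1 * P$0$0 + of_int m2 * P$0$1) (of_int m1 * P$1$0 + of_int m2 * P$1$1)
   (of_int n1 * P$0$0 + of_int n2 * P$0$1) (of_int n1 * P$1$0 + of_int n2 * P$1$1) \<in> Gamma a0 P"
  unfolding Gamma_def mem_Collect_eq mk_nth
proof (intro conjI)
  show "\<exists>k::int. 0 = a0 * of_int k" by (rule exI[of _ 0]) simp
  show "\<exists>n::int. (0::real) = of_int n" by (rule exI[of _ 0]) simp
qed blast+

lemma mem_e1: "e1 \<in> Gamma a0 P"
  unfolding Gamma_def mem_Collect_eq e_nth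
proof (intro conjI)
  show "\<exists>k::int. 0 = a0 * of_int k" by (rule exI[of _ 0]) simp
  show "\<exists>n::int. (1::real) = of_int n" by (rule exI[of _ 1]) simp
qed (rule exI[of _ 0], rule exI[of _ 0], simp)+

lemma A1_mem: "A1 P \<in> Gamma a0 P" using mem_lat[of 1 P 0 0 0 a0] unfolding A1_def by simp
lemma A2_mem: "A2 P \<in> Gamma a0 P" using mem_lat[of 0 P 1 0 0 a0] unfolding A2_def by simp
lemma B_mem: "of_int k1 *\<^sub>R B1 P + of_int k2 *\<^sub>R B2 P \<in> Gamma a0 P"
  using mem_lat[of 0 P 0 k1 k2 a0] unfolding B1_def B2_def by (simp add: mult.commute)

definition "C1 (f::real^6 \<Rightarrow> real) \<longleftrightarrow> (\<forall>p. f differentiable (at p)) \<and>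
   (\<forall>v. continuous_on UNIV (\<lambda>p. frechet_derivative f (at p) v))"
definition "Dv f v = (\<lambda>p. frechet_derivative f (at p) v)"

lemma C1_DD': "C1 f \<Longrightarrow> DD f v (Dv f v)"
  unfolding C1_def Dv_def by (rule C1_DD) auto

lemma C1_cont: "C1 f \<Longrightarrow> continuous_on UNIV f"
  unfolding C1_def
  by (intro differentiable_imp_continuous_on) (simp add: differentiable_on_def differentiable_at_withinI)

lemma C1_dcont: "C1 f \<Longrightarrow> continuous_on UNIV (Dv f v)"
  unfolding C1_def Dv_def by auto

lemma C1_lin: "C1 f \<Longrightarrow> Dv f (a *\<^sub>R x + b *\<^sub>R y) p = a * Dv f x p + b * Dv f y p"
  unfolding C1_def Dv_def by (intro fd_lin2) auto

lemma smooth_C1': "smooth_fun f \<Longrightarrow> C1 f"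
  unfolding C1_def using smooth_diff smooth_dcont by blast

lemma comb_C1': 
  assumes "smooth_fun f" "smooth_fun g"
  shows "C1 (\<lambda>q. f q + q$1 * g q)"
    and "Dv (\<lambda>q. f q + q$1 * g q) v p = Dv f v p + (p$1 * Dv g v p + v$1 * g p)"
  using comb_C1[OF assms] unfolding C1_def Dv_def by auto

definition "G0 \<omega> = (\<lambda>q. \<omega> q e2 e3)"
definition "G1 \<omega> = (\<lambda>q. \<omega> q e3 e4 + q$1 * \<omega> q e3 e2)"
definition "G2 \<omega> = (\<lambda>q. \<omega> q e1 e4 + q$1 * \<omega> q e1 e2)"
definition "G3 \<omega> = (\<lambda>q. \<omega> q e1 e3)"

locale sympl =
  fixes \<omega> :: "real^6 \<Rightarrow> real^6 \<Rightarrow> real^6 \<Rightarrow> real" and a0 :: real and P :: "real^2^2"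
    and J :: "real^6 \<Rightarrow> real^6 \<Rightarrow> real^6"
  assumes TF: "two_form \<omega>" and CL: "closed_form \<omega>" and LI: "left_invariant_under (Gamma a0 P) \<omega>"
    and POS: "\<forall>p v. v \<noteq> 0 \<longrightarrow> \<omega> p v (J p v) > 0"
    and JJ: "\<forall>p v k. k \<in> {1,2,3} \<longrightarrow> Phi k p (J p v) = \<i> * Phi k p v"
    and DP: "P$0$0 * P$1$1 - P$0$1 * P$1$0 \<noteq> 0"

context sympl
begin

lemma bil: "bilinear (\<omega> p)" and alt: "\<omega> p v v = 0" and smooth: "smooth_fun (\<lambda>p. \<omega> p v w)"
  using TF unfolding two_form_def by auto

lemma antisym: "\<omega> p u w = - \<omega> p w u"
  using bil_antisym[OF bil] alt by blast

lemma G0_pos: "G0 \<omega> p > 0"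
proof -
  define u where "u = J p e2"
  define t where "t = p$0"
  have h: "\<And>k. k \<in> {1,2,3} \<Longrightarrow> Phi k p u = \<i> * Phi k p e2" using JJ u_def by blast
  have c1: "coframe 1 p u = - coframe 2 p e2" "coframe 2 p u = coframe 1 p e2"
    using h[of 1] by (simp_all add: Phi_def complex_eq_iff)
  have c2: "coframe 3 p u = - coframe 4 p e2" "coframe 4 p u = coframe 3 p e2"
    using h[of 2] by (simp_all add: Phi_def complex_eq_iff)
  have c3: "coframe 5 p u = - coframe 6 p e2" "coframe 6 p u = coframe 5 p e2"
    using h[of 3] by (simp_all add: Phi_def complex_eq_iff)
  have u0: "u$0 = 0" "u$1 = 0" using c1 by (simp_all add: coframe_def)
  have u45: "u$4 = 0" "u$5 = 0" using c3 by (simp_all add: coframe_def)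
  have u2: "u$2 = 0" using c2(1) u45 by (simp add: coframe_def)
  have u3: "exp t * u$3 = exp (- t)" using c2(2) u45 by (simp add: coframe_def t_def)
  have uu: "u = (u$3) *\<^sub>R e3"
    by (rule vec6_eq) (simp_all add: u0 u45 u2)
  have "u$3 = exp (-t) / exp t" using u3 by (simp add: field_simps)
  then have pos3: "u$3 > 0" by simp
  have "e2 \<noteq> 0"
  proof
    assume "e2 = 0" then have "e2$2 = 0" by simp
    then show False by simp
  qed
  then have "\<omega> p e2 u > 0" using POS u_def by blast
  also have "\<omega> p e2 u = \<omega> p e2 ((u$3) *\<^sub>R e3)"
    using uu by (rule arg_cong[where f="\<omega> p e2"])
  also have "\<dots> = u$3 * \<omega> p e2 e3"
    by (simp add: bilinear_rmul[OF bil])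
  finally show ?thesis using pos3 unfolding G0_def by (simp add: zero_less_mult_iff)
qed

lemma inv0:
  assumes "\<gamma> \<in> Gamma a0 P" "\<gamma>$0 = 0"
  shows "\<omega> (\<gamma> + (p + mk 0 0 (\<gamma>$1 * p$4) (\<gamma>$1 * p$5) 0 0))
           (v + mk 0 0 (\<gamma>$1 * v$4) (\<gamma>$1 * v$5) 0 0) (w + mk 0 0 (\<gamma>$1 * w$4) (\<gamma>$1 * w$5) 0 0) = \<omega> p v w"
  using LI assms unfolding left_invariant_under_def
  by (metis gmul_deriv gmul_t0)

lemma inv_tr:
  assumes "\<gamma> \<in> Gamma a0 P" "\<gamma>$0 = 0" "\<gamma>$1 = 0"
  shows "\<omega> (p + \<gamma>) v w = \<omega> p v w"
proof -
  have z: "mk 0 0 0 0 0 0 = 0" by (simp add: mk_zero_iff)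
  show ?thesis using inv0[OF assms(1,2), of p v w] assms(3) by (simp add: z add.commute)
qed

lemma Gs_tr:
  assumes "\<gamma> \<in> Gamma a0 P" "\<gamma>$0 = 0" "\<gamma>$1 = 0"
  shows "G1 \<omega> (p + \<gamma>) = G1 \<omega> p" "G2 \<omega> (p + \<gamma>) = G2 \<omega> p" "G3 \<omega> (p + \<gamma>) = G3 \<omega> p"
    "G0 \<omega> (p + \<gamma>) = G0 \<omega> p"
  unfolding G0_def G1_def G2_def G3_def using inv_tr[OF assms] assms(3) by simp_all

lemma G1_x:
  "G1 \<omega> (p + e1 + mk 0 0 (p$4) (p$5) 0 0) = G1 \<omega> p"
proof -
  let ?x = "e1 + (p + mk 0 0 (p$4) (p$5) 0 0)"
  have i: "\<omega> ?x (v + mk 0 0 (v$4) (v$5) 0 0) (w + mk 0 0 (w$4) (w$5) 0 0) = \<omega> p v w" for v w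
    using inv0[OF mem_e1, of p v w] by simp
  have z: "mk 0 0 0 0 0 0 = 0" by (simp add: mk_zero_iff)
  have e4: "e4 + mk 0 0 1 0 0 0 = e4 + e2" by (simp add: e2_def)
  have h1: "\<omega> ?x e3 e4 + \<omega> ?x e3 e2 = \<omega> p e3 e4"
    using i[of e3 e4] by (simp add: z e4 bilinear_radd[OF bil])
  have h2: "\<omega> ?x e3 e2 = \<omega> p e3 e2"
    using i[of e3 e2] by (simp add: z)
  have "?x = p + e1 + mk 0 0 (p$4) (p$5) 0 0" by (simp add: algebra_simps)
  moreover have "?x $ 1 = p$1 + 1" by simp
  ultimately show ?thesis unfolding G1_def using h1 h2 by (simp add: algebra_simps)
qed

lemma C1_G: "C1 (G0 \<omega>)" "C1 (G1 \<omega>)" "C1 (G2 \<omega>)" "C1 (G3 \<omega>)"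
  unfolding G0_def G1_def G2_def G3_def
  by (simp_all add: smooth_C1' smooth comb_C1'(1))

lemma identity:
  "G0 \<omega> p = - Dv (G1 \<omega>) e1 p + Dv (G2 \<omega>) e3 p - Dv (G3 \<omega>) e4 p - p$1 * Dv (G3 \<omega>) e2 p"
proof -
  let ?W = "\<lambda>a b. (\<lambda>q. \<omega> q a b)"
  have d1: "Dv (G1 \<omega>) e1 p = Dv (?W e3 e4) e1 p + (p$1 * Dv (?W e3 e2) e1 p + \<omega> p e3 e2)"
    unfolding G1_def by (simp add: comb_C1'(2) smooth)
  have d2: "Dv (G2 \<omega>) e3 p = Dv (?W e1 e4) e3 p + (p$1 * Dv (?W e1 e2) e3 p)"
    unfolding G2_def by (simp add: comb_C1'(2) smooth)
  have neg: "?W e3 e2 = (\<lambda>q. - \<omega> q e2 e3)" using antisym by blast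
  have d3: "Dv (?W e3 e2) e1 p = - Dv (?W e2 e3) e1 p"
    unfolding neg Dv_def by (rule fd_neg) (rule smooth_diff[OF smooth])
  have c1: "ext_d2 \<omega> p e1 e3 e4 = 0" and c2: "ext_d2 \<omega> p e1 e2 e3 = 0"
    using CL unfolding closed_form_def by auto
  have c1': "Dv (?W e3 e4) e1 p - Dv (?W e1 e4) e3 p + Dv (?W e1 e3) e4 p = 0"
    using c1 unfolding ext_d2_def Dv_def .
  have c2': "Dv (?W e2 e3) e1 p - Dv (?W e1 e3) e2 p + Dv (?W e1 e2) e3 p = 0"
    using c2 unfolding ext_d2_def Dv_def .
  have "Dv (?W e2 e3) e1 p = Dv (?W e1 e3) e2 p - Dv (?W e1 e2) e3 p"
    using c2' by linarith
  then have "p$1 * Dv (?W e2 e3) e1 p = p$1 * Dv (?W e1 e3) e2 p - p$1 * Dv (?W e1 e2) e3 p"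
    by (simp add: right_diff_distrib)
  then show ?thesis
    unfolding d1 d2 d3 using c1' antisym[of p e3 e2] unfolding G0_def G3_def
    by (simp add: algebra_simps)
qed

end

context sympl
begin

lemma contra: False
proof -
  define a1 where "a1 = A1 P"
  define a2 where "a2 = A2 P"
  define b1 where "b1 = B1 P"
  define b2 where "b2 = B2 P"
  define M where "M h = av a1 (av a2 h)" for h
  define g0 where "g0 = G0 \<omega>"
  define g1 where "g1 = G1 \<omega>"
  define g2 where "g2 = G2 \<omega>"
  define g3 where "g3 = G3 \<omega>"
  have C: "C1 g0" "C1 g1" "C1 g2" "C1 g3" using C1_G by (simp_all add: g0_def g1_def g2_def g3_def)
  have a1m: "a1 \<in> Gamma a0 P" "a1$0 = 0" "a1$1 = 0" unfolding a1_def using A1_mem by auto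
  have a2m: "a2 \<in> Gamma a0 P" "a2$0 = 0" "a2$1 = 0" unfolding a2_def using A2_mem by auto
  have per: "\<And>q. g1 (q + a1) = g1 q" "\<And>q. g1 (q + a2) = g1 q"
     "\<And>q. g2 (q + a1) = g2 q" "\<And>q. g2 (q + a2) = g2 q"
     "\<And>q. g3 (q + a1) = g3 q" "\<And>q. g3 (q + a2) = g3 q"
    unfolding g1_def g2_def g3_def using Gs_tr[OF a1m] Gs_tr[OF a2m] by auto
  have Mdd: "\<And>h v h'. DD h v h' \<Longrightarrow> DD (M h) v (M h')"
    unfolding M_def by (intro av_DD)
  have Mcont: "\<And>h. continuous_on UNIV h \<Longrightarrow> continuous_on UNIV (M h)"
    unfolding M_def by (intro av_cont)
  have Madd: "\<And>f g p. continuous_on UNIV f \<Longrightarrow> continuous_on UNIV g \<Longrightarrow>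
      M (\<lambda>q. f q + g q) p = M f p + M g p"
  proof -
    fix f g :: "real^6 \<Rightarrow> real" and p
    assume f: "continuous_on UNIV f" and g: "continuous_on UNIV g"
    have "av a2 (\<lambda>q. f q + g q) = (\<lambda>q. av a2 f q + av a2 g q)"
      by (rule ext, rule av_add[OF f g])
    then show "M (\<lambda>q. f q + g q) p = M f p + M g p"
      unfolding M_def by (simp add: av_add av_cont f g)
  qed
  have Mneg: "\<And>f p. M (\<lambda>q. - f q) p = - M f p"
  proof -
    fix f :: "real^6 \<Rightarrow> real" and p
    have "av a2 (\<lambda>q. - f q) = (\<lambda>q. - av a2 f q)" by (rule ext, rule av_neg)
    then show "M (\<lambda>q. - f q) p = - M f p" unfolding M_def by (simp add: av_neg)
  qed
  have Mcm: "\<And>f c p. M (\<lambda>q. c * f q) p = c * M f p"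
  proof -
    fix f :: "real^6 \<Rightarrow> real" and c p
    have "av a2 (\<lambda>q. c * f q) = (\<lambda>q. c * av a2 f q)" by (rule ext, rule av_cmult)
    then show "M (\<lambda>q. c * f q) p = c * M f p" unfolding M_def by (simp add: av_cmult)
  qed
  have Mx: "\<And>f p. M (\<lambda>q. q$1 * f q) p = p$1 * M f p"
  proof -
    fix f :: "real^6 \<Rightarrow> real" and p
    have "av a2 (\<lambda>q. q$1 * f q) = (\<lambda>q. q$1 * av a2 f q)" by (rule ext, rule av_coord[OF a2m(3)])
    then show "M (\<lambda>q. q$1 * f q) p = p$1 * M f p" unfolding M_def by (simp add: av_coord[OF a1m(3)])
  qed
  have Mzero: "\<And>g p. C1 g \<Longrightarrow> (\<And>q. g (q + a1) = g q) \<Longrightarrow> (\<And>q. g (q + a2) = g q) \<Longrightarrow>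
      M (Dv g a1) p = 0 \<and> M (Dv g a2) p = 0"
  proof -
    fix g :: "real^6 \<Rightarrow> real" and p
    assume g: "C1 g" and p1: "\<And>q. g (q + a1) = g q" and p2: "\<And>q. g (q + a2) = g q"
    have z2: "av a2 (Dv g a2) = (\<lambda>q. 0)" by (rule ext, rule av_zero[OF C1_DD'[OF g] p2])
    have "DD (av a2 g) a1 (av a2 (Dv g a1))" by (rule av_DD[OF C1_DD'[OF g]])
    moreover have "\<And>q. av a2 g (q + a1) = av a2 g q" by (rule av_transl[where h=g, OF p1])
    ultimately have "av a1 (av a2 (Dv g a1)) p = 0" by (rule av_zero)
    moreover have "av a1 (\<lambda>q. 0) p = 0" unfolding av_def by simp
    ultimately show "M (Dv g a1) p = 0 \<and> M (Dv g a2) p = 0" unfolding M_def z2 by simp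
  qed
  define D where "D = P$0$0 * P$1$1 - P$0$1 * P$1$0"
  have yc: "\<And>y1 y2. mk 0 0 y1 y2 0 0 = ((P$1$1 * y1 - P$0$1 * y2) / D) *\<^sub>R a1 + ((P$0$0 * y2 - P$1$0 * y1) / D) *\<^sub>R a2"
    unfolding D_def a1_def a2_def by (rule ycomb[OF DP])
  have zc: "\<And>y1 y2. mk 0 0 0 0 y1 y2 = ((P$1$1 * y1 - P$0$1 * y2) / D) *\<^sub>R b1 + ((P$0$0 * y2 - P$1$0 * y1) / D) *\<^sub>R b2"
    unfolding D_def b1_def b2_def by (rule zcomb[OF DP])
  have Mdir: "\<And>g p v. C1 g \<Longrightarrow> (\<And>q. g (q + a1) = g q) \<Longrightarrow> (\<And>q. g (q + a2) = g q) \<Longrightarrow>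
      v = mk 0 0 y1 y2 0 0 \<Longrightarrow> M (Dv g v) p = 0" for y1 y2
  proof -
    fix g :: "real^6 \<Rightarrow> real" and p v
    assume g: "C1 g" and p1: "\<And>q. g (q + a1) = g q" and p2: "\<And>q. g (q + a2) = g q"
      and v: "v = mk 0 0 y1 y2 0 0"
    define \<alpha> where "\<alpha> = (P$1$1 * y1 - P$0$1 * y2) / D"
    define \<beta> where "\<beta> = (P$0$0 * y2 - P$1$0 * y1) / D"
    have "Dv g v = (\<lambda>q. \<alpha> * Dv g a1 q + \<beta> * Dv g a2 q)"
      unfolding v yc \<alpha>_def[symmetric] \<beta>_def[symmetric] by (rule ext, rule C1_lin[OF g])
    then have "M (Dv g v) p = \<alpha> * M (Dv g a1) p + \<beta> * M (Dv g a2) p"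
      using Madd[of "\<lambda>q. \<alpha> * Dv g a1 q" "\<lambda>q. \<beta> * Dv g a2 q"] Mcm
      by (simp add: C1_dcont[OF g] continuous_on_mult_left)
    then show "M (Dv g v) p = 0" using Mzero[OF g p1 p2] by simp
  qed
  have e2y: "e2 = mk 0 0 1 0 0 0" and e3y: "e3 = mk 0 0 0 1 0 0" by (simp_all add: e2_def e3_def)
  have Z2: "\<And>p. M (Dv g2 e3) p = 0" by (rule Mdir[OF C(3) per(3,4) e3y])
  have Z3: "\<And>p. M (Dv g3 e2) p = 0" by (rule Mdir[OF C(4) per(5,6) e2y])
  have gid: "g0 = (\<lambda>q. (- Dv g1 e1 q + - Dv g3 e4 q) + (Dv g2 e3 q + - (q$1 * Dv g3 e2 q)))"
    unfolding g0_def g1_def g2_def g3_def by (rule ext) (simp add: identity)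
  have cx: "continuous_on UNIV (\<lambda>q. q$1 * Dv g3 e2 q)"
    by (intro continuous_intros C1_dcont C(4))
  have MI: "\<And>p. M g0 p = - M (Dv g1 e1) p + - M (Dv g3 e4) p"
  proof -
    fix p
    have c1: "continuous_on UNIV (\<lambda>q. - Dv g1 e1 q + - Dv g3 e4 q)"
      by (intro continuous_intros C1_dcont C)
    have c2: "continuous_on UNIV (\<lambda>q. Dv g2 e3 q + - (q$1 * Dv g3 e2 q))"
      by (intro continuous_intros C1_dcont C)
    have "M g0 p = M (\<lambda>q. - Dv g1 e1 q + - Dv g3 e4 q) p + M (\<lambda>q. Dv g2 e3 q + - (q$1 * Dv g3 e2 q)) p"
      unfolding gid by (rule Madd[OF c1 c2])
    also have "M (\<lambda>q. - Dv g1 e1 q + - Dv g3 e4 q) p = M (\<lambda>q. - Dv g1 e1 q) p + M (\<lambda>q. - Dv g3 e4 q) p"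
      by (rule Madd) (intro continuous_intros C1_dcont C)+
    also have "M (\<lambda>q. Dv g2 e3 q + - (q$1 * Dv g3 e2 q)) p = M (Dv g2 e3) p + M (\<lambda>q. - (q$1 * Dv g3 e2 q)) p"
      using Madd[of "Dv g2 e3" "\<lambda>q. - (q$1 * Dv g3 e2 q)" p] by (simp add: C1_dcont C cx continuous_on_minus)
    finally have "M g0 p = (- M (Dv g1 e1) p + - M (Dv g3 e4) p) + (M (Dv g2 e3) p + - (p$1 * M (Dv g3 e2) p))"
      by (simp only: Mneg Mx)
    then show "M g0 p = - M (Dv g1 e1) p + - M (Dv g3 e4) p" using Z2 Z3 by simp
  qed
  define c where "c q = mk 0 0 (q$4) (q$5) 0 0" for q :: "real^6"
  have stepa: "\<And>x. av a2 g1 (x + e1) = av a2 g1 (x - c x)"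
  proof -
    fix x :: "real^6"
    have "g1 (x + e1 + r *\<^sub>R a2) = g1 (x - c x + r *\<^sub>R a2)" for r
    proof -
      define y where "y = x - c x + r *\<^sub>R a2"
      have y4: "y$4 = x$4" "y$5 = x$5" unfolding y_def c_def a2_def by simp_all
      have m: "mk 0 0 (y$4) (y$5) 0 0 = c x" unfolding c_def y4 ..
      have "y + e1 + mk 0 0 (y$4) (y$5) 0 0 = x + e1 + r *\<^sub>R a2"
        unfolding m unfolding y_def by (simp add: algebra_simps)
      then have "G1 \<omega> (x + e1 + r *\<^sub>R a2) = G1 \<omega> y" using G1_x[of y] by metis
      then show ?thesis unfolding g1_def y_def .
    qed
    then show "av a2 g1 (x + e1) = av a2 g1 (x - c x)" unfolding av_def by simp
  qed
  have stepb: "\<And>q. M g1 (q + e1) = M g1 (q - c q)"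
  proof -
    fix q :: "real^6"
    have "av a2 g1 (q + e1 + s *\<^sub>R a1) = av a2 g1 (q - c q + s *\<^sub>R a1)" for s
    proof -
      have cc: "c (q + s *\<^sub>R a1) = c q" unfolding c_def a1_def by simp
      have "av a2 g1 (q + e1 + s *\<^sub>R a1) = av a2 g1 ((q + s *\<^sub>R a1) + e1)" by (simp add: algebra_simps)
      also have "\<dots> = av a2 g1 (q + s *\<^sub>R a1 - c (q + s *\<^sub>R a1))" by (rule stepa)
      also have "\<dots> = av a2 g1 (q - c q + s *\<^sub>R a1)" unfolding cc by (simp add: algebra_simps)
      finally show ?thesis .
    qed
    then show "M g1 (q + e1) = M g1 (q - c q)" unfolding M_def av_def[of a1] by simp
  qed
  have DM1: "DD (M g1) a1 (M (Dv g1 a1))" "DD (M g1) a2 (M (Dv g1 a2))"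
    by (rule Mdd[OF C1_DD'[OF C(2)]])+
  have const1: "\<And>x t. M g1 (x + t *\<^sub>R a1) = M g1 x"
    by (rule DD_const_line[OF DM1(1)]) (use Mzero[OF C(2) per(1,2)] in blast)
  have const2: "\<And>x t. M g1 (x + t *\<^sub>R a2) = M g1 x"
    by (rule DD_const_line[OF DM1(2)]) (use Mzero[OF C(2) per(1,2)] in blast)
  have perx: "\<And>q. M g1 (q + e1) = M g1 q"
  proof -
    fix q :: "real^6"
    define \<alpha> where "\<alpha> = (P$1$1 * q$4 - P$0$1 * q$5) / D"
    define \<beta> where "\<beta> = (P$0$0 * q$5 - P$1$0 * q$4) / D"
    have "c q = \<alpha> *\<^sub>R a1 + \<beta> *\<^sub>R a2" unfolding c_def \<alpha>_def \<beta>_def by (rule yc)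
    then have "q - c q = (q + (- \<alpha>) *\<^sub>R a1) + (- \<beta>) *\<^sub>R a2" by (simp add: algebra_simps)
    then have "M g1 (q - c q) = M g1 ((q + (- \<alpha>) *\<^sub>R a1) + (- \<beta>) *\<^sub>R a2)" by (rule arg_cong[where f="M g1"])
    also have "\<dots> = M g1 q" by (simp only: const1 const2)
    finally have "M g1 (q - c q) = M g1 q" .
    then show "M g1 (q + e1) = M g1 q" using stepb by simp
  qed
  have Z1: "\<And>p. av e1 (M (Dv g1 e1)) p = 0"
    by (rule av_zero[OF Mdd[OF C1_DD'[OF C(2)]] perx])
  define Q where "Q = av e1 (M g3)"
  define Q' where "Q' = av e1 (M (Dv g3 e4))"
  have DQ: "DD Q e4 Q'" unfolding Q_def Q'_def by (rule av_DD[OF Mdd[OF C1_DD'[OF C(4)]]])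
  have Qneg: "\<And>p. Q' p < 0"
  proof -
    fix p
    have g0c: "continuous_on UNIV g0" by (rule C1_cont[OF C(1)])
    have g0p: "\<And>q. g0 q > 0" unfolding g0_def by (rule G0_pos)
    have "\<And>q. M g0 q > 0" unfolding M_def
      by (rule av_pos[OF av_cont[OF g0c]]) (rule av_pos[OF g0c g0p])
    then have pos: "av e1 (M g0) p > 0" by (rule av_pos[OF Mcont[OF g0c]])
    have MM: "M g0 = (\<lambda>q. - M (Dv g1 e1) q + - M (Dv g3 e4) q)" by (rule ext, rule MI)
    have "av e1 (M g0) p = av e1 (\<lambda>q. - M (Dv g1 e1) q) p + av e1 (\<lambda>q. - M (Dv g3 e4) q) p"
      unfolding MM by (rule av_add) (intro continuous_intros Mcont C1_dcont C)+
    also have "\<dots> = - Q' p" using Z1 by (simp add: av_neg Q'_def)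
    finally show "Q' p < 0" using pos by simp
  qed
  have Qper: "\<And>q k1 k2. Q (q + (of_int k1 *\<^sub>R b1 + of_int k2 *\<^sub>R b2)) = Q q"
  proof -
    fix q :: "real^6" and k1 k2 :: int
    define \<gamma> where "\<gamma> = of_int k1 *\<^sub>R b1 + of_int k2 *\<^sub>R b2"
    have gm: "\<gamma> \<in> Gamma a0 P" "\<gamma>$0 = 0" "\<gamma>$1 = 0" unfolding \<gamma>_def b1_def b2_def using B_mem by auto
    have h3: "\<And>x. g3 (x + \<gamma>) = g3 x" unfolding g3_def using Gs_tr(3)[OF gm] by blast
    have h2: "\<And>x. av a2 g3 (x + \<gamma>) = av a2 g3 x" by (rule av_transl[where h=g3, OF h3])
    have h1: "\<And>x. M g3 (x + \<gamma>) = M g3 x" unfolding M_def by (rule av_transl[where h="av a2 g3", OF h2])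
    show "Q (q + (of_int k1 *\<^sub>R b1 + of_int k2 *\<^sub>R b2)) = Q q"
      unfolding Q_def \<gamma>_def[symmetric] by (rule av_transl[where h="M g3", OF h1])
  qed
  have Qc: "continuous_on UNIV Q" using DQ unfolding DD_def by simp
  define F where "F z = Q (fst z *\<^sub>R b1 + snd z *\<^sub>R b2)" for z :: "real \<times> real"
  have Fc: "continuous_on (cbox (0,0) (1,1)) F" unfolding F_def
    by (rule cont_comp[OF Qc]) (intro continuous_intros)
  have ne: "cbox (0::real,0::real) (1,1) \<noteq> {}" by (simp add: cbox_interval)
  obtain z0 where z0: "z0 \<in> cbox (0,0) (1,1)" "\<And>z. z \<in> cbox (0,0) (1,1) \<Longrightarrow> F z \<le> F z0"
    using continuous_attains_sup[OF compact_cbox ne Fc] by blast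
  have glob: "\<And>s r. Q (s *\<^sub>R b1 + r *\<^sub>R b2) \<le> F z0"
  proof -
    fix s r :: real
    define s' where "s' = s - of_int \<lfloor>s\<rfloor>"
    define r' where "r' = r - of_int \<lfloor>r\<rfloor>"
    have "0 \<le> s'" "s' \<le> 1" "0 \<le> r'" "r' \<le> 1" unfolding s'_def r'_def
      using of_int_floor_le[of s] real_of_int_floor_add_one_gt[of s]
        of_int_floor_le[of r] real_of_int_floor_add_one_gt[of r] by linarith+
    then have mem: "(s', r') \<in> cbox (0,0) (1,1)" by (simp add: cbox_interval)
    have "s *\<^sub>R b1 + r *\<^sub>R b2 = (s' *\<^sub>R b1 + r' *\<^sub>R b2) + (of_int \<lfloor>s\<rfloor> *\<^sub>R b1 + of_int \<lfloor>r\<rfloor> *\<^sub>R b2)"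
      unfolding s'_def r'_def by (simp add: algebra_simps)
    then have "Q (s *\<^sub>R b1 + r *\<^sub>R b2) = F (s', r')" unfolding F_def using Qper by simp
    then show "Q (s *\<^sub>R b1 + r *\<^sub>R b2) \<le> F z0" using z0(2)[OF mem] by simp
  qed
  define q0 where "q0 = fst z0 *\<^sub>R b1 + snd z0 *\<^sub>R b2"
  define \<kappa>1 where "\<kappa>1 = (P$1$1 * 1 - P$0$1 * 0) / D"
  define \<kappa>2 where "\<kappa>2 = (P$0$0 * 0 - P$1$0 * 1) / D"
  have e4z: "e4 = \<kappa>1 *\<^sub>R b1 + \<kappa>2 *\<^sub>R b2"
    unfolding \<kappa>1_def \<kappa>2_def e4_def by (rule zc)
  have le: "\<forall>y. \<bar>0 - y\<bar> < 1 \<longrightarrow> Q (q0 + y *\<^sub>R e4) \<le> Q (q0 + 0 *\<^sub>R e4)"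
  proof (intro allI impI)
    fix y :: real
    have "q0 + y *\<^sub>R e4 = (fst z0 + y * \<kappa>1) *\<^sub>R b1 + (snd z0 + y * \<kappa>2) *\<^sub>R b2"
      unfolding q0_def e4z by (simp add: algebra_simps)
    then have "Q (q0 + y *\<^sub>R e4) \<le> F z0" using glob by simp
    then show "Q (q0 + y *\<^sub>R e4) \<le> Q (q0 + 0 *\<^sub>R e4)" unfolding F_def q0_def by simp
  qed
  have der: "((\<lambda>y. Q (q0 + y *\<^sub>R e4)) has_real_derivative Q' (q0 + 0 *\<^sub>R e4)) (at 0)"
    using DQ unfolding DD_def by blast
  have "Q' (q0 + 0 *\<^sub>R e4) = 0" by (rule DERIV_local_max[OF der zero_less_one le])
  then show False using Qneg[of "q0 + 0 *\<^sub>R e4"] by simp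
qed

end

theorem mainTheorem5:
  fixes B :: "int^2^2" and P :: "real^2^2" and a0 :: real
    and J :: "real^6 \<Rightarrow> real^6 \<Rightarrow> real^6"
  assumes "det B = 1"
    and "a0 > 0"
    and "invertible P"
    and "P ** (\<chi> i j. real_of_int (B$i$j)) ** matrix_inv P =
           (\<chi> i j. if i = j then (if i = 0 then exp a0 else exp (- a0)) else 0)"
    and "\<forall>p v k. k \<in> {1,2,3} \<longrightarrow> Phi k p (J p v) = \<i> * Phi k p v"
  shows "\<not> (\<exists>\<omega>. compatible_symplectic (Gamma a0 P) J \<omega>)"
proof
  assume "\<exists>\<omega>. compatible_symplectic (Gamma a0 P) J \<omega>"
  then obtain \<omega> where cs: "compatible_symplectic (Gamma a0 P) J \<omega>" by blast
  have "det P \<noteq> 0" using assms(3) by (simp add: invertible_det_nz)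
  moreover have t2: "(2::2) = 0" by simp
  ultimately have DP: "P$0$0 * P$1$1 - P$0$1 * P$1$0 \<noteq> 0" by (simp add: det_2 t2 mult.commute)
  interpret sympl \<omega> a0 P J
    using cs assms(5) DP unfolding compatible_symplectic_def by unfold_locales auto
  show False by (rule contra)
qed

end
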